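(* Let $A$ be a convex $m\times n$ $(0,1)$-matrix in which every row sum and every column sum is at least $2$. Then $A$ permits an interchange resulting in another convex $m\times n$ $(0,1)$-matrix $B$ if and only if there are indices $1\le a<b\le m$ and $1\le c<d\le n$ such that, with $k=b-a+1$ and $l=d-c+1$: (i) the submatrix of $A$ in rows $a,\dots,b$ and columns $c,\dots,d$ equals $J^1_{k,l}$ or $J^2_{k,l}$; (ii) in rows $a$ and $b$, all entries of $A$ outside columns $c,\dots,d$ are $0$; (iii) in columns $c$ and $d$, all entries of $A$ outside rows $a,\dots,b$ are $0$.
   Context: A $(0,1)$-matrix is convex if in every row and every column the 1's occur consecutively. An interchange replaces a $2\times 2$ submatrix (in rows $i<i'$ and columns $j<j'$) equal to $\begin{bmatrix}1&0\\0&1\end{bmatrix}$ by $\begin{bmatrix}0&1\\1&0\end{bmatrix}$ or vice versa; it preserves row and column sums. $J_{k,l}$ is the $k\times l$ all-ones matrix; $J^1_{k,l}$ is obtained from $J_{k,l}$ by replacing the entries in positions $(1,1)$ and $(k,l)$ by $0$, and $J^2_{k,l}$ is obtained from $J_{k,l}$ by replacing the entries in positions $(1,l)$ and $(k,1)$ by $0$. *)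

theory Defs
  imports Main
begin

text \<open>An m x n matrix is a function nat => nat => nat; only entries (i,j) with
  i < m, j < n are meaningful. Indices are 0-based.\<close>

definition zero_one :: "nat \<Rightarrow> nat \<Rightarrow> (nat \<Rightarrow> nat \<Rightarrow> nat) \<Rightarrow> bool" where
  "zero_one m n A \<longleftrightarrow> (\<forall>i<m. \<forall>j<n. A i j = 0 \<or> A i j = 1)"

definition convex01 :: "nat \<Rightarrow> nat \<Rightarrow> (nat \<Rightarrow> nat \<Rightarrow> nat) \<Rightarrow> bool" where
  "convex01 m n A \<longleftrightarrow> zero_one m n A \<and>
     (\<forall>i<m. \<forall>j1 j j2. j1 \<le> j \<and> j \<le> j2 \<and> j2 < n \<and> A i j1 = 1 \<and> A i j2 = 1 \<longrightarrow> A i j = 1) \<and>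
     (\<forall>j<n. \<forall>i1 i i2. i1 \<le> i \<and> i \<le> i2 \<and> i2 < m \<and> A i1 j = 1 \<and> A i2 j = 1 \<longrightarrow> A i j = 1)"

definition interchange :: "nat \<Rightarrow> nat \<Rightarrow> (nat \<Rightarrow> nat \<Rightarrow> nat) \<Rightarrow> (nat \<Rightarrow> nat \<Rightarrow> nat) \<Rightarrow> bool" where
  "interchange m n A B \<longleftrightarrow> (\<exists>i i' j j'. i < i' \<and> i' < m \<and> j < j' \<and> j' < n \<and>
     ((A i j = 1 \<and> A i j' = 0 \<and> A i' j = 0 \<and> A i' j' = 1 \<and>
       B i j = 0 \<and> B i j' = 1 \<and> B i' j = 1 \<and> B i' j' = 0) \<or>
      (A i j = 0 \<and> A i j' = 1 \<and> A i' j = 1 \<and> A i' j' = 0 \<and>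
       B i j = 1 \<and> B i j' = 0 \<and> B i' j = 0 \<and> B i' j' = 1)) \<and>
     (\<forall>p<m. \<forall>q<n. (p,q) \<notin> {(i,j),(i,j'),(i',j),(i',j')} \<longrightarrow> B p q = A p q))"

text \<open>J^1_{k,l} and J^2_{k,l} as functions of 0-based local indices (r,s), r<k, s<l.\<close>
definition J1 :: "nat \<Rightarrow> nat \<Rightarrow> nat \<Rightarrow> nat \<Rightarrow> nat" where
  "J1 k l r s = (if (r = 0 \<and> s = 0) \<or> (r = k - 1 \<and> s = l - 1) then 0 else 1)"

definition J2 :: "nat \<Rightarrow> nat \<Rightarrow> nat \<Rightarrow> nat \<Rightarrow> nat" where
  "J2 k l r s = (if (r = 0 \<and> s = l - 1) \<or> (r = k - 1 \<and> s = 0) then 0 else 1)"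

definition submatrix_eq :: "(nat \<Rightarrow> nat \<Rightarrow> nat) \<Rightarrow> nat \<Rightarrow> nat \<Rightarrow> nat \<Rightarrow> nat \<Rightarrow> (nat \<Rightarrow> nat \<Rightarrow> nat) \<Rightarrow> bool" where
  "submatrix_eq A a b c d M \<longleftrightarrow> (\<forall>r s. r \<le> b - a \<and> s \<le> d - c \<longrightarrow> A (a + r) (c + s) = M r s)"

end

theory Submission
  imports Defs
begin

definition cvx1 :: "nat \<Rightarrow> (nat \<Rightarrow> nat) \<Rightarrow> bool" where
  "cvx1 n f \<longleftrightarrow> (\<forall>j1 j j2. j1 \<le> j \<and> j \<le> j2 \<and> j2 < n \<and> f j1 = 1 \<and> f j2 = 1 \<longrightarrow> f j = 1)"

lemma convex01_iff:
  "convex01 m n A \<longleftrightarrow> zero_one m n A \<and> (\<forall>i<m. cvx1 n (A i)) \<and> (\<forall>j<n. cvx1 m (\<lambda>i. A i j))"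
  unfolding convex01_def cvx1_def by blast

lemma sum_ge2:
  fixes f :: "nat \<Rightarrow> nat"
  assumes "\<forall>q<n. f q = 0 \<or> f q = 1" "j < n" "2 \<le> sum f {..<n}"
  shows "\<exists>q<n. q \<noteq> j \<and> f q = 1"
proof (rule ccontr)
  assume "\<not> ?thesis"
  then have z: "\<forall>q\<in>{..<n} - {j}. f q = 0" using assms(1) by auto
  have "sum f {..<n} = f j + sum f ({..<n} - {j})"
    using assms(2) by (simp add: sum.remove)
  also have "sum f ({..<n} - {j}) = 0" using z by simp
  finally show False using assms by force
qed

lemma cvx1D: "cvx1 n f \<Longrightarrow> j1 \<le> j \<Longrightarrow> j \<le> j2 \<Longrightarrow> j2 < n \<Longrightarrow> f j1 = 1 \<Longrightarrow> f j2 = 1 \<Longrightarrow> f j = 1"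
  unfolding cvx1_def by blast

lemma row1:
  fixes f g :: "nat \<Rightarrow> nat"
  assumes z: "\<forall>q<n. f q = 0 \<or> f q = 1" and cf: "cvx1 n f" and cg: "cvx1 n g"
    and jj: "j < j'" "j' < n" and v: "f j = 1" "f j' = 0" "g j = 0" "g j' = 1"
    and eq: "\<forall>q<n. q \<noteq> j \<and> q \<noteq> j' \<longrightarrow> g q = f q"
    and s: "2 \<le> sum f {..<n}"
  shows "\<forall>x<n. f x = (if j \<le> x \<and> x < j' then 1 else 0)"
proof -
  have jn: "j < n" using jj by simp
  obtain q where q: "q < n" "q \<noteq> j" "f q = 1" using sum_ge2[OF z jn s] by auto
  have "q \<noteq> j'" using q v by auto
  then have gq: "g q = 1" using eq q by auto
  have "\<not> q > j'"
  proof
    assume "q > j'" then have "f j' = 1" using cvx1D[OF cf, of j j' q] q v jj by simp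
    then show False using v by simp
  qed
  then have "q < j'" using \<open>q \<noteq> j'\<close> by auto
  have "\<not> q < j"
  proof
    assume "q < j" then have "g j = 1" using cvx1D[OF cg, of q j j'] gq v jj by simp
    then show False using v by simp
  qed
  then have qj: "j < q" using q by auto
  show ?thesis
  proof (intro allI impI)
    fix x assume x: "x < n"
    show "f x = (if j \<le> x \<and> x < j' then 1 else 0)"
    proof (cases "j \<le> x \<and> x < j'")
      case T: True
      show ?thesis
      proof (cases "x \<le> q")
        case True
        then show ?thesis using cvx1D[OF cf, of j x q] v q T by simp
      next
        case False
        then have "g x = 1" using cvx1D[OF cg, of q x j'] gq v jj T by simp
        then show ?thesis using eq x False qj T by auto
      qed
    next
      case False
      have "f x \<noteq> 1"
      proof
        assume fx: "f x = 1"
        show False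
        proof (cases "x < j")
          case True
          then have "g x = 1" using eq x fx jj by auto
          then have "g j = 1" using cvx1D[OF cg, of x j j'] True jj v by simp
          then show False using v by simp
        next
          case c2: False
          then have "j' \<le> x" using False by auto
          then have "f j' = 1" using cvx1D[OF cf, of j j' x] x fx v jj by simp
          then show False using v by simp
        qed
      qed
      then show ?thesis using z x False by auto
    qed
  qed
qed

lemma row2:
  fixes f g :: "nat \<Rightarrow> nat"
  assumes z: "\<forall>q<n. f q = 0 \<or> f q = 1" and cf: "cvx1 n f" and cg: "cvx1 n g"
    and jj: "j < j'" "j' < n" and v: "f j = 0" "f j' = 1" "g j = 1" "g j' = 0"
    and eq: "\<forall>q<n. q \<noteq> j \<and> q \<noteq> j' \<longrightarrow> g q = f q"
    and s: "2 \<le> sum f {..<n}"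
  shows "\<forall>x<n. f x = (if j < x \<and> x \<le> j' then 1 else 0)"
proof -
  obtain q where q: "q < n" "q \<noteq> j'" "f q = 1" using sum_ge2[OF z jj(2) s] by auto
  have "q \<noteq> j" using q v by auto
  then have gq: "g q = 1" using eq q by auto
  have "\<not> q < j"
  proof
    assume "q < j" then have "f j = 1" using cvx1D[OF cf, of q j j'] q v jj by simp
    then show False using v by simp
  qed
  then have "j < q" using \<open>q \<noteq> j\<close> by auto
  have "\<not> q > j'"
  proof
    assume "q > j'" then have "g j' = 1" using cvx1D[OF cg, of j j' q] gq q v jj by simp
    then show False using v by simp
  qed
  then have qj: "q < j'" using q by auto
  show ?thesis
  proof (intro allI impI)
    fix x assume x: "x < n"
    show "f x = (if j < x \<and> x \<le> j' then 1 else 0)"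
    proof (cases "j < x \<and> x \<le> j'")
      case T: True
      show ?thesis
      proof (cases "q \<le> x")
        case True
        then show ?thesis using cvx1D[OF cf, of q x j'] v q T jj by simp
      next
        case False
        then have "g x = 1" using cvx1D[OF cg, of j x q] gq v q T by simp
        then show ?thesis using eq x False qj T by auto
      qed
    next
      case False
      have "f x \<noteq> 1"
      proof
        assume fx: "f x = 1"
        show False
        proof (cases "x \<le> j")
          case True
          then have "f j = 1" using cvx1D[OF cf, of x j j'] fx v jj by simp
          then show False using v by simp
        next
          case c2: False
          then have "j' < x" using False by auto
          then have "g x = 1" using eq x fx jj by auto
          then have "g j' = 1" using cvx1D[OF cg, of j j' x] \<open>j' < x\<close> x v jj by simp
          then show False using v by simp
        qed
      qed
      then show ?thesis using z x False by auto
    qed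
  qed
qed

lemma ivl_cvx: "\<forall>x<n. f x = (if l \<le> x \<and> x \<le> h then 1 else 0) \<Longrightarrow> cvx1 (n::nat) f"
  unfolding cvx1_def
proof (intro allI impI)
  fix j1 j j2 assume a: "\<forall>x<n. f x = (if l \<le> x \<and> x \<le> h then 1 else 0)"
    and H: "j1 \<le> j \<and> j \<le> j2 \<and> j2 < n \<and> f j1 = 1 \<and> f j2 = 1"
  have "j1 < n" "j < n" "j2 < n" using H by auto
  have e1: "f j1 = (if l \<le> j1 \<and> j1 \<le> h then 1 else 0)" using a \<open>j1 < n\<close> by blast
  have e2: "f j2 = (if l \<le> j2 \<and> j2 \<le> h then 1 else 0)" using a \<open>j2 < n\<close> by blast
  have e: "f j = (if l \<le> j \<and> j \<le> h then 1 else 0)" using a \<open>j < n\<close> by blast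
  have 1: "l \<le> j1"
  proof (rule ccontr)
    assume "\<not> l \<le> j1" then have "f j1 = 0" using e1 by simp
    then show False using H by simp
  qed
  have 2: "j2 \<le> h"
  proof (rule ccontr)
    assume "\<not> j2 \<le> h" then have "f j2 = 0" using e2 by simp
    then show False using H by simp
  qed
  have "l \<le> j \<and> j \<le> h" using 1 2 H by simp
  then show "f j = 1" using e by simp
qed

lemma subD: "submatrix_eq A a b c d M \<Longrightarrow> a \<le> p \<Longrightarrow> p \<le> b \<Longrightarrow> c \<le> q \<Longrightarrow> q \<le> d \<Longrightarrow>
  A p q = M (p - a) (q - c)"
proof -
  assume a: "submatrix_eq A a b c d M" "a \<le> p" "p \<le> b" "c \<le> q" "q \<le> d"
  have "A (a + (p - a)) (c + (q - c)) = M (p - a) (q - c)"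
    using a(1)[unfolded submatrix_eq_def, rule_format, of "p - a" "q - c"] a by (simp add: diff_le_mono)
  then show ?thesis using a by simp
qed

lemma back_dir:
  assumes cA: "convex01 m n A" and ab: "a < b" "b < m" "c < d" "d < n"
  and corners: "(A a c = 1 \<and> A a d = 0 \<and> A b c = 0 \<and> A b d = 1) \<or> (A a c = 0 \<and> A a d = 1 \<and> A b c = 1 \<and> A b d = 0)"
  and ra: "\<forall>x<n. (if x = c \<or> x = d then 1 - A a x else A a x) = (if l1 \<le> x \<and> x \<le> h1 then 1 else 0)"
  and rb: "\<forall>x<n. (if x = c \<or> x = d then 1 - A b x else A b x) = (if l2 \<le> x \<and> x \<le> h2 then 1 else 0)"
  and cc: "\<forall>x<m. (if x = a \<or> x = b then 1 - A x c else A x c) = (if l3 \<le> x \<and> x \<le> h3 then 1 else 0)"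
  and cd: "\<forall>x<m. (if x = a \<or> x = b then 1 - A x d else A x d) = (if l4 \<le> x \<and> x \<le> h4 then 1 else 0)"
  shows "\<exists>B. interchange m n A B \<and> convex01 m n B"
proof -
  define B where "B p q = (if (p = a \<or> p = b) \<and> (q = c \<or> q = d) then 1 - A p q else A p q)" for p q
  have "interchange m n A B"
    unfolding interchange_def
  proof (rule exI[of _ a], rule exI[of _ b], rule exI[of _ c], rule exI[of _ d], intro conjI)
    show "\<forall>p<m. \<forall>q<n. (p, q) \<notin> {(a, c), (a, d), (b, c), (b, d)} \<longrightarrow> B p q = A p q"
      by (auto simp: B_def)
    have Bv: "B a c = 1 - A a c" "B a d = 1 - A a d" "B b c = 1 - A b c" "B b d = 1 - A b d"
      by (simp_all add: B_def)
    show "A a c = 1 \<and> A a d = 0 \<and> A b c = 0 \<and> A b d = 1 \<and> B a c = 0 \<and> B a d = 1 \<and> B b c = 1 \<and> B b d = 0 \<or>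
    A a c = 0 \<and> A a d = 1 \<and> A b c = 1 \<and> A b d = 0 \<and> B a c = 1 \<and> B a d = 0 \<and> B b c = 0 \<and> B b d = 1"
      using corners unfolding Bv by (elim disjE; simp)
  qed (use ab in simp_all)
  moreover have "convex01 m n B"
    unfolding convex01_iff
  proof (intro conjI allI impI)
    have zA: "\<forall>p<m. \<forall>q<n. A p q = 0 \<or> A p q = 1" using cA unfolding convex01_def zero_one_def by blast
    show "zero_one m n B" unfolding zero_one_def
    proof (intro allI impI)
      fix p q assume "p < m" "q < n"
      then have "A p q = 0 \<or> A p q = 1" using zA by blast
      then show "B p q = 0 \<or> B p q = 1" unfolding B_def by auto
    qed
  next
    fix p assume p: "p < m"
    show "cvx1 n (B p)"
    proof (cases "p = a \<or> p = b")
      case True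
      then show ?thesis
      proof
        assume "p = a"
        then have "\<forall>x<n. B p x = (if l1 \<le> x \<and> x \<le> h1 then 1 else 0)" using ra by (simp add: B_def)
        then show ?thesis by (rule ivl_cvx)
      next
        assume "p = b"
        then have "\<forall>x<n. B p x = (if l2 \<le> x \<and> x \<le> h2 then 1 else 0)" using rb ab by (simp add: B_def)
        then show ?thesis by (rule ivl_cvx)
      qed
    next
      case False
      then have "B p = A p" by (auto simp: B_def)
      then show ?thesis using cA p unfolding convex01_iff by auto
    qed
  next
    fix q assume q: "q < n"
    show "cvx1 m (\<lambda>p. B p q)"
    proof (cases "q = c \<or> q = d")
      case True
      then show ?thesis
      proof
        assume "q = c"
        then have "\<forall>x<m. B x q = (if l3 \<le> x \<and> x \<le> h3 then 1 else 0)" using cc by (simp add: B_def)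
        then show ?thesis by (rule ivl_cvx)
      next
        assume "q = d"
        then have "\<forall>x<m. B x q = (if l4 \<le> x \<and> x \<le> h4 then 1 else 0)" using cd ab by (simp add: B_def)
        then show ?thesis by (rule ivl_cvx)
      qed
    next
      case False
      then have "(\<lambda>p. B p q) = (\<lambda>p. A p q)" by (auto simp: B_def)
      then show ?thesis using cA q unfolding convex01_iff by auto
    qed
  qed
  ultimately show ?thesis by blast
qed

lemma conv1:
  fixes f :: "nat \<Rightarrow> nat"
  assumes "\<forall>x<n. f x = (if lo < x \<and> x \<le> hi then 1 else 0)" "lo < hi"
  shows "\<forall>x<n. (if x = lo \<or> x = hi then 1 - f x else f x) = (if lo \<le> x \<and> x \<le> hi - 1 then 1 else 0)"
proof (intro allI impI)
  fix x assume "x < n"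
  then have "f x = (if lo < x \<and> x \<le> hi then 1 else 0)" using assms(1) by simp
  then show "(if x = lo \<or> x = hi then 1 - f x else f x) = (if lo \<le> x \<and> x \<le> hi - 1 then 1 else 0)"
    using assms(2) by (cases "x = lo"; cases "x = hi"; simp; linarith)
qed

lemma conv2:
  fixes f :: "nat \<Rightarrow> nat"
  assumes "\<forall>x<n. f x = (if lo \<le> x \<and> x < hi then 1 else 0)" "lo < hi"
  shows "\<forall>x<n. (if x = lo \<or> x = hi then 1 - f x else f x) = (if lo + 1 \<le> x \<and> x \<le> hi then 1 else 0)"
proof (intro allI impI)
  fix x assume "x < n"
  then have "f x = (if lo \<le> x \<and> x < hi then 1 else 0)" using assms(1) by simp
  then show "(if x = lo \<or> x = hi then 1 - f x else f x) = (if lo + 1 \<le> x \<and> x \<le> hi then 1 else 0)"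
    using assms(2) by (cases "x = lo"; cases "x = hi"; simp; linarith)
qed

theorem mainTheorem8:
  fixes m n :: nat and A :: "nat \<Rightarrow> nat \<Rightarrow> nat"
  assumes "convex01 m n A"
    and "\<forall>i<m. (\<Sum>j<n. A i j) \<ge> 2"
    and "\<forall>j<n. (\<Sum>i<m. A i j) \<ge> 2"
  shows "(\<exists>B. interchange m n A B \<and> convex01 m n B) \<longleftrightarrow>
    (\<exists>a b c d. a < b \<and> b < m \<and> c < d \<and> d < n \<and>
       (submatrix_eq A a b c d (J1 (b - a + 1) (d - c + 1)) \<or>
        submatrix_eq A a b c d (J2 (b - a + 1) (d - c + 1))) \<and>
       (\<forall>j<n. (j < c \<or> d < j) \<longrightarrow> A a j = 0 \<and> A b j = 0) \<and>
       (\<forall>i<m. (i < a \<or> b < i) \<longrightarrow> A i c = 0 \<and> A i d = 0))"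
proof
  have zA: "\<forall>p<m. \<forall>q<n. A p q = 0 \<or> A p q = 1" using assms(1) unfolding convex01_def zero_one_def by blast
  have cvA: "\<forall>p<m. cvx1 n (A p)" "\<forall>q<n. cvx1 m (\<lambda>p. A p q)" using assms(1) unfolding convex01_iff by auto
  assume "\<exists>B. interchange m n A B \<and> convex01 m n B"
  then obtain B where iB: "interchange m n A B" and cB: "convex01 m n B" by blast
  have cvB: "\<forall>p<m. cvx1 n (B p)" "\<forall>q<n. cvx1 m (\<lambda>p. B p q)" using cB unfolding convex01_iff by auto
  from iB obtain i i' j j' where ii: "i < i'" "i' < m" "j < j'" "j' < n"
    and cs: "(A i j = 1 \<and> A i j' = 0 \<and> A i' j = 0 \<and> A i' j' = 1 \<and>
       B i j = 0 \<and> B i j' = 1 \<and> B i' j = 1 \<and> B i' j' = 0) \<or>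
      (A i j = 0 \<and> A i j' = 1 \<and> A i' j = 1 \<and> A i' j' = 0 \<and>
       B i j = 1 \<and> B i j' = 0 \<and> B i' j = 0 \<and> B i' j' = 1)"
    and oth: "\<forall>p<m. \<forall>q<n. (p,q) \<notin> {(i,j),(i,j'),(i',j),(i',j')} \<longrightarrow> B p q = A p q"
    unfolding interchange_def by blast
  have im: "i < m" using ii by simp
  have jn: "j < n" using ii by simp
  have zri: "\<forall>q<n. A i q = 0 \<or> A i q = 1" using zA im by blast
  have zri': "\<forall>q<n. A i' q = 0 \<or> A i' q = 1" using zA ii by blast
  have zcj: "\<forall>p<m. A p j = 0 \<or> A p j = 1" using zA jn by blast
  have zcj': "\<forall>p<m. A p j' = 0 \<or> A p j' = 1" using zA ii by blast
  have eri: "\<forall>q<n. q \<noteq> j \<and> q \<noteq> j' \<longrightarrow> B i q = A i q" using oth im by auto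
  have eri': "\<forall>q<n. q \<noteq> j \<and> q \<noteq> j' \<longrightarrow> B i' q = A i' q" using oth ii by auto
  have ecj: "\<forall>p<m. p \<noteq> i \<and> p \<noteq> i' \<longrightarrow> B p j = A p j" using oth jn by auto
  have ecj': "\<forall>p<m. p \<noteq> i \<and> p \<noteq> i' \<longrightarrow> B p j' = A p j'" using oth ii by auto
  have sri: "2 \<le> sum (A i) {..<n}" using assms(2) im by auto
  have sri': "2 \<le> sum (A i') {..<n}" using assms(2) ii by auto
  have scj: "2 \<le> sum (\<lambda>p. A p j) {..<m}" using assms(3) jn by auto
  have scj': "2 \<le> sum (\<lambda>p. A p j') {..<m}" using assms(3) ii by auto
  note cAi = cvA(1)[rule_format, OF im] and cAi' = cvA(1)[rule_format, OF ii(2)]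
  note cBi = cvB(1)[rule_format, OF im] and cBi' = cvB(1)[rule_format, OF ii(2)]
  note cAj = cvA(2)[rule_format, OF jn] and cAj' = cvA(2)[rule_format, OF ii(4)]
  note cBj = cvB(2)[rule_format, OF jn] and cBj' = cvB(2)[rule_format, OF ii(4)]
  from cs show "\<exists>a b c d. a < b \<and> b < m \<and> c < d \<and> d < n \<and>
       (submatrix_eq A a b c d (J1 (b - a + 1) (d - c + 1)) \<or>
        submatrix_eq A a b c d (J2 (b - a + 1) (d - c + 1))) \<and>
       (\<forall>j<n. (j < c \<or> d < j) \<longrightarrow> A a j = 0 \<and> A b j = 0) \<and>
       (\<forall>i<m. (i < a \<or> b < i) \<longrightarrow> A i c = 0 \<and> A i d = 0)"
  proof
    assume v: "A i j = 1 \<and> A i j' = 0 \<and> A i' j = 0 \<and> A i' j' = 1 \<and>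
       B i j = 0 \<and> B i j' = 1 \<and> B i' j = 1 \<and> B i' j' = 0"
    have R1: "\<forall>x<n. A i x = (if j \<le> x \<and> x < j' then 1 else 0)"
      by (rule row1[OF zri cAi cBi ii(3,4) _ _ _ _ eri sri]) (use v in auto)
    have R2: "\<forall>x<n. A i' x = (if j < x \<and> x \<le> j' then 1 else 0)"
      by (rule row2[OF zri' cAi' cBi' ii(3,4) _ _ _ _ eri' sri']) (use v in auto)
    have C1: "\<forall>x<m. A x j = (if i \<le> x \<and> x < i' then 1 else 0)"
      by (rule row1[OF zcj cAj cBj ii(1,2) _ _ _ _ ecj scj]) (use v in auto)
    have C2: "\<forall>x<m. A x j' = (if i < x \<and> x \<le> i' then 1 else 0)"
      by (rule row2[OF zcj' cAj' cBj' ii(1,2) _ _ _ _ ecj' scj']) (use v in auto)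
    have sub: "submatrix_eq A i i' j j' (J2 (i' - i + 1) (j' - j + 1))"
      unfolding submatrix_eq_def
    proof (intro allI impI)
      fix r s assume rs: "r \<le> i' - i \<and> s \<le> j' - j"
      have xn: "j + s < n" using rs ii by auto
      have js: "j + s \<le> j'" using rs ii by linarith
      consider "r = 0" | "r = i' - i" | "0 < r \<and> r < i' - i" using rs by linarith
      then show "A (i + r) (j + s) = J2 (i' - i + 1) (j' - j + 1) r s"
      proof cases
        case 1
        then show ?thesis using R1 xn rs ii by (auto simp: J2_def)
      next
        case 2
        then have "i + r = i'" using ii by simp
        then show ?thesis using R2 xn rs ii 2 by (auto simp: J2_def)
      next
        case 3
        have pm: "i + r < m" using 3 ii by linarith
        have ir: "i < i + r" "i + r < i'" using 3 ii by linarith+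
        have "A (i + r) j = 1" using C1 pm ir by simp
        moreover have "A (i + r) j' = 1" using C2 pm ir by simp
        ultimately have "A (i + r) (j + s) = 1"
          using cvA(1)[rule_format, OF pm] cvx1D[of n "A (i + r)" j "j + s" j'] js ii by simp
        then show ?thesis using 3 by (auto simp: J2_def)
      qed
    qed
    have z1: "\<forall>x<n. (x < j \<or> j' < x) \<longrightarrow> A i x = 0 \<and> A i' x = 0" using R1 R2 by auto
    have z2: "\<forall>x<m. (x < i \<or> i' < x) \<longrightarrow> A x j = 0 \<and> A x j' = 0" using C1 C2 by auto
    show ?thesis
      apply (rule exI[of _ i], rule exI[of _ i'], rule exI[of _ j], rule exI[of _ j'])
      using ii sub z1 z2 by blast
  next
    assume v: "A i j = 0 \<and> A i j' = 1 \<and> A i' j = 1 \<and> A i' j' = 0 \<and>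
       B i j = 1 \<and> B i j' = 0 \<and> B i' j = 0 \<and> B i' j' = 1"
    have R1: "\<forall>x<n. A i x = (if j < x \<and> x \<le> j' then 1 else 0)"
      by (rule row2[OF zri cAi cBi ii(3,4) _ _ _ _ eri sri]) (use v in auto)
    have R2: "\<forall>x<n. A i' x = (if j \<le> x \<and> x < j' then 1 else 0)"
      by (rule row1[OF zri' cAi' cBi' ii(3,4) _ _ _ _ eri' sri']) (use v in auto)
    have C1: "\<forall>x<m. A x j = (if i < x \<and> x \<le> i' then 1 else 0)"
      by (rule row2[OF zcj cAj cBj ii(1,2) _ _ _ _ ecj scj]) (use v in auto)
    have C2: "\<forall>x<m. A x j' = (if i \<le> x \<and> x < i' then 1 else 0)"
      by (rule row1[OF zcj' cAj' cBj' ii(1,2) _ _ _ _ ecj' scj']) (use v in auto)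
    have sub: "submatrix_eq A i i' j j' (J1 (i' - i + 1) (j' - j + 1))"
      unfolding submatrix_eq_def
    proof (intro allI impI)
      fix r s assume rs: "r \<le> i' - i \<and> s \<le> j' - j"
      have xn: "j + s < n" using rs ii by auto
      have js: "j + s \<le> j'" using rs ii by linarith
      consider "r = 0" | "r = i' - i" | "0 < r \<and> r < i' - i" using rs by linarith
      then show "A (i + r) (j + s) = J1 (i' - i + 1) (j' - j + 1) r s"
      proof cases
        case 1
        then show ?thesis using R1 xn rs ii by (auto simp: J1_def)
      next
        case 2
        then have "i + r = i'" using ii by simp
        then show ?thesis using R2 xn rs ii 2 by (auto simp: J1_def)
      next
        case 3
        have pm: "i + r < m" using 3 ii by linarith
        have ir: "i < i + r" "i + r < i'" using 3 ii by linarith+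
        have "A (i + r) j = 1" using C1 pm ir by simp
        moreover have "A (i + r) j' = 1" using C2 pm ir by simp
        ultimately have "A (i + r) (j + s) = 1"
          using cvA(1)[rule_format, OF pm] cvx1D[of n "A (i + r)" j "j + s" j'] js ii by simp
        then show ?thesis using 3 by (auto simp: J1_def)
      qed
    qed
    have z1: "\<forall>x<n. (x < j \<or> j' < x) \<longrightarrow> A i x = 0 \<and> A i' x = 0" using R1 R2 by auto
    have z2: "\<forall>x<m. (x < i \<or> i' < x) \<longrightarrow> A x j = 0 \<and> A x j' = 0" using C1 C2 by auto
    show ?thesis
      apply (rule exI[of _ i], rule exI[of _ i'], rule exI[of _ j], rule exI[of _ j'])
      using ii sub z1 z2 by blast
  qed
next
  assume "\<exists>a b c d. a < b \<and> b < m \<and> c < d \<and> d < n \<and>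
       (submatrix_eq A a b c d (J1 (b - a + 1) (d - c + 1)) \<or>
        submatrix_eq A a b c d (J2 (b - a + 1) (d - c + 1))) \<and>
       (\<forall>j<n. (j < c \<or> d < j) \<longrightarrow> A a j = 0 \<and> A b j = 0) \<and>
       (\<forall>i<m. (i < a \<or> b < i) \<longrightarrow> A i c = 0 \<and> A i d = 0)"
  then obtain a b c d where ab: "a < b" "b < m" "c < d" "d < n"
    and sub: "submatrix_eq A a b c d (J1 (b - a + 1) (d - c + 1)) \<or>
        submatrix_eq A a b c d (J2 (b - a + 1) (d - c + 1))"
    and zr: "\<forall>j<n. (j < c \<or> d < j) \<longrightarrow> A a j = 0 \<and> A b j = 0"
    and zc: "\<forall>i<m. (i < a \<or> b < i) \<longrightarrow> A i c = 0 \<and> A i d = 0" by blast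
  from sub show "\<exists>B. interchange m n A B \<and> convex01 m n B"
  proof
    assume s1: "submatrix_eq A a b c d (J1 (b - a + 1) (d - c + 1))"
    have Ra: "\<forall>x<n. A a x = (if c < x \<and> x \<le> d then 1 else 0)"
    proof (intro allI impI)
      fix x assume x: "x < n"
      show "A a x = (if c < x \<and> x \<le> d then 1 else 0)"
      proof (cases "x < c \<or> d < x")
        case True then show ?thesis using zr x by auto
      next
        case False
        then have "A a x = J1 (b - a + 1) (d - c + 1) (a - a) (x - c)" using subD[OF s1, of a x] ab by simp
        then show ?thesis using False ab by (auto simp: J1_def)
      qed
    qed
    have Rb: "\<forall>x<n. A b x = (if c \<le> x \<and> x < d then 1 else 0)"
    proof (intro allI impI)
      fix x assume x: "x < n"
      show "A b x = (if c \<le> x \<and> x < d then 1 else 0)"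
      proof (cases "x < c \<or> d < x")
        case True then show ?thesis using zr x by auto
      next
        case False
        then have "A b x = J1 (b - a + 1) (d - c + 1) (b - a) (x - c)" using subD[OF s1, of b x] ab by simp
        then show ?thesis using False ab by (auto simp: J1_def)
      qed
    qed
    have Cc: "\<forall>x<m. A x c = (if a < x \<and> x \<le> b then 1 else 0)"
    proof (intro allI impI)
      fix x assume x: "x < m"
      show "A x c = (if a < x \<and> x \<le> b then 1 else 0)"
      proof (cases "x < a \<or> b < x")
        case True then show ?thesis using zc x by auto
      next
        case False
        then have "A x c = J1 (b - a + 1) (d - c + 1) (x - a) (c - c)" using subD[OF s1, of x c] ab by simp
        then show ?thesis using False ab by (auto simp: J1_def)
      qed
    qed
    have Cd: "\<forall>x<m. A x d = (if a \<le> x \<and> x < b then 1 else 0)"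
    proof (intro allI impI)
      fix x assume x: "x < m"
      show "A x d = (if a \<le> x \<and> x < b then 1 else 0)"
      proof (cases "x < a \<or> b < x")
        case True then show ?thesis using zc x by auto
      next
        case False
        then have "A x d = J1 (b - a + 1) (d - c + 1) (x - a) (d - c)" using subD[OF s1, of x d] ab by simp
        then show ?thesis using False ab by (auto simp: J1_def)
      qed
    qed
    show ?thesis
    proof (rule back_dir[OF assms(1) ab, of c "d - 1" "c + 1" d "a" "b - 1" "a + 1" b])
      have "c < n" using ab by simp
      then have "A a c = (if c < c \<and> c \<le> d then 1 else 0)" "A b c = (if c \<le> c \<and> c < d then 1 else 0)"
        "A a d = (if c < d \<and> d \<le> d then 1 else 0)" "A b d = (if c \<le> d \<and> d < d then 1 else 0)"
        using Ra Rb ab(4) by blast+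
      then show "A a c = 1 \<and> A a d = 0 \<and> A b c = 0 \<and> A b d = 1 \<or> A a c = 0 \<and> A a d = 1 \<and> A b c = 1 \<and> A b d = 0"
        using ab by simp
      show "\<forall>x<n. (if x = c \<or> x = d then 1 - A a x else A a x) = (if c \<le> x \<and> x \<le> d - 1 then 1 else 0)"
        by (rule conv1[OF Ra]) (use ab in simp)
      show "\<forall>x<n. (if x = c \<or> x = d then 1 - A b x else A b x) = (if c + 1 \<le> x \<and> x \<le> d then 1 else 0)"
        by (rule conv2[OF Rb]) (use ab in simp)
      show "\<forall>x<m. (if x = a \<or> x = b then 1 - A x c else A x c) = (if a \<le> x \<and> x \<le> b - 1 then 1 else 0)"
        by (rule conv1[OF Cc]) (use ab in simp)
      show "\<forall>x<m. (if x = a \<or> x = b then 1 - A x d else A x d) = (if a + 1 \<le> x \<and> x \<le> b then 1 else 0)"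
        by (rule conv2[OF Cd]) (use ab in simp)
    qed
  next
    assume s1: "submatrix_eq A a b c d (J2 (b - a + 1) (d - c + 1))"
    have Ra: "\<forall>x<n. A a x = (if c \<le> x \<and> x < d then 1 else 0)"
    proof (intro allI impI)
      fix x assume x: "x < n"
      show "A a x = (if c \<le> x \<and> x < d then 1 else 0)"
      proof (cases "x < c \<or> d < x")
        case True then show ?thesis using zr x by auto
      next
        case False
        then have "A a x = J2 (b - a + 1) (d - c + 1) (a - a) (x - c)" using subD[OF s1, of a x] ab by simp
        then show ?thesis using False ab by (auto simp: J2_def)
      qed
    qed
    have Rb: "\<forall>x<n. A b x = (if c < x \<and> x \<le> d then 1 else 0)"
    proof (intro allI impI)
      fix x assume x: "x < n"
      show "A b x = (if c < x \<and> x \<le> d then 1 else 0)"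
      proof (cases "x < c \<or> d < x")
        case True then show ?thesis using zr x by auto
      next
        case False
        then have "A b x = J2 (b - a + 1) (d - c + 1) (b - a) (x - c)" using subD[OF s1, of b x] ab by simp
        then show ?thesis using False ab by (auto simp: J2_def)
      qed
    qed
    have Cc: "\<forall>x<m. A x c = (if a \<le> x \<and> x < b then 1 else 0)"
    proof (intro allI impI)
      fix x assume x: "x < m"
      show "A x c = (if a \<le> x \<and> x < b then 1 else 0)"
      proof (cases "x < a \<or> b < x")
        case True then show ?thesis using zc x by auto
      next
        case False
        then have "A x c = J2 (b - a + 1) (d - c + 1) (x - a) (c - c)" using subD[OF s1, of x c] ab by simp
        then show ?thesis using False ab by (auto simp: J2_def)
      qed
    qed
    have Cd: "\<forall>x<m. A x d = (if a < x \<and> x \<le> b then 1 else 0)"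
    proof (intro allI impI)
      fix x assume x: "x < m"
      show "A x d = (if a < x \<and> x \<le> b then 1 else 0)"
      proof (cases "x < a \<or> b < x")
        case True then show ?thesis using zc x by auto
      next
        case False
        then have "A x d = J2 (b - a + 1) (d - c + 1) (x - a) (d - c)" using subD[OF s1, of x d] ab by simp
        then show ?thesis using False ab by (auto simp: J2_def)
      qed
    qed
    show ?thesis
    proof (rule back_dir[OF assms(1) ab, of "c + 1" d c "d - 1" "a + 1" b a "b - 1"])
      have "c < n" using ab by simp
      then have "A a c = (if c \<le> c \<and> c < d then 1 else 0)" "A b c = (if c < c \<and> c \<le> d then 1 else 0)"
        "A a d = (if c \<le> d \<and> d < d then 1 else 0)" "A b d = (if c < d \<and> d \<le> d then 1 else 0)"
        using Ra Rb ab(4) by blast+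
      then show "A a c = 1 \<and> A a d = 0 \<and> A b c = 0 \<and> A b d = 1 \<or> A a c = 0 \<and> A a d = 1 \<and> A b c = 1 \<and> A b d = 0"
        using ab by simp
      show "\<forall>x<n. (if x = c \<or> x = d then 1 - A a x else A a x) = (if c + 1 \<le> x \<and> x \<le> d then 1 else 0)"
        by (rule conv2[OF Ra]) (use ab in simp)
      show "\<forall>x<n. (if x = c \<or> x = d then 1 - A b x else A b x) = (if c \<le> x \<and> x \<le> d - 1 then 1 else 0)"
        by (rule conv1[OF Rb]) (use ab in simp)
      show "\<forall>x<m. (if x = a \<or> x = b then 1 - A x c else A x c) = (if a + 1 \<le> x \<and> x \<le> b then 1 else 0)"
        by (rule conv2[OF Cc]) (use ab in simp)
      show "\<forall>x<m. (if x = a \<or> x = b then 1 - A x d else A x d) = (if a \<le> x \<and> x \<le> b - 1 then 1 else 0)"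
        by (rule conv1[OF Cd]) (use ab in simp)
    qed
  qed
qed

end
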